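(* Let $0<\lambda\le\Lambda$. There exist $\alpha,r_0,\delta\in(0,1)$, depending only on $\lambda,\Lambda,N$, such that for every $r\in(0,r_0]$ and every kernel $K\in L^\infty(\Omega\times B_1)$ with $\lambda\le K\le\Lambda$ on $\Omega\times B_1$, where $\Omega\supseteq B_{r+r^2}\setminus\overline{B_r}$, the function $\varphi(x):=\ell^\alpha((|x|-r)_+)$ satisfies $L_K\varphi(x)\ge\delta$ for every $x\in B_{r+r^2}$ with $|x|>r$.
   Context: $\ell(\rho):=|\ln(\min\{\rho,1/10\})|^{-1}$ for $\rho>0$ and $\ell(0):=0$. $L_K\varphi(x):=\int_{B_1(x)}\frac{\varphi(x)-\varphi(y)}{|y-x|^N}K(x,y-x)\,dy$. $B_r$ is the open ball of radius $r$ centered at $0$. *)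

theory Defs
  imports "HOL-Analysis.Analysis"
begin

definition ell :: "real \<Rightarrow> real" where
  "ell \<rho> = (if \<rho> > 0 then 1 / \<bar>ln (min \<rho> (1/10))\<bar> else 0)"

definition LK :: "('a::euclidean_space \<Rightarrow> 'a \<Rightarrow> real) \<Rightarrow> ('a \<Rightarrow> real) \<Rightarrow> 'a \<Rightarrow> real" where
  "LK K \<phi> x = (LINT y : ball x 1 | lborel.
      (\<phi> x - \<phi> y) / norm (y - x) ^ DIM('a) * K x (y - x))"

end

theory Submission
  imports Defs
begin
lemma K_meas:
  fixes K :: "'a::euclidean_space \<Rightarrow> 'a \<Rightarrow> real"
  assumes "(\<lambda>p. K (fst p) (snd p)) \<in> borel_measurable (restrict_space (lborel \<Otimes>\<^sub>M lborel) (\<Omega> \<times> ball 0 1))" "x \<in> \<Omega>"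
  shows "(\<lambda>y. K x (y - x)) \<in> borel_measurable (restrict_space lborel (ball x 1))"
proof -
  have h: "(\<lambda>y. (x, y - x)) \<in> measurable (restrict_space lborel (ball x 1)) (restrict_space (lborel \<Otimes>\<^sub>M lborel) (\<Omega> \<times> ball 0 1))"
    apply (rule measurable_restrict_space3)
     apply measurable
    using assms(2) by (auto simp: dist_norm norm_minus_commute)
  from measurable_compose[OF h assms(1)] show ?thesis by simp
qed

lemma meas_F:
  fixes K :: "'a::euclidean_space \<Rightarrow> 'a \<Rightarrow> real" and \<phi> :: "'a \<Rightarrow> real"
  assumes "(\<lambda>y. K x (y - x)) \<in> borel_measurable (restrict_space lborel (ball x 1))"
   and [measurable]: "\<phi> \<in> borel_measurable lborel"
  shows "(\<lambda>y. indicator (ball x 1) y *\<^sub>R ((\<phi> x - \<phi> y) / norm (y - x) ^ DIM('a) * K x (y - x))) \<in> borel_measurable lborel"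
proof -
  have "(\<lambda>y. (\<phi> x - \<phi> y) / norm (y - x) ^ DIM('a) * K x (y - x)) \<in> borel_measurable (restrict_space lborel (ball x 1))"
    apply (rule borel_measurable_times[OF _ assms(1)])
    apply (rule measurable_restrict_space1) by measurable
  then show ?thesis by (subst (asm) borel_measurable_restrict_space_iff) auto
qed

lemma dyadic_shell:
  fixes d :: real assumes "0 < d" "d < 1"
  shows "\<exists>k. (1/2)^(Suc k) \<le> d \<and> d < (1/2)^k"
proof -
  obtain n where n: "(1/2::real)^n < d" using real_arch_pow_inv[of d "1/2"] assms by auto
  define P where "P = (\<lambda>n. (1/2::real)^n \<le> d)"
  have Pn: "P n" using n by (simp add: P_def)
  let ?l = "LEAST n. P n"
  have Pl: "P ?l" by (rule LeastI[of P n, OF Pn])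
  have l0: "?l \<noteq> 0"
  proof
    assume "?l = 0" then have "P 0" using Pl by simp
    then show False using assms by (simp add: P_def)
  qed
  then obtain k where k: "?l = Suc k" by (cases ?l) auto
  have "\<not> P k" using not_less_Least[of k P] k by auto
  then show ?thesis using Pl k by (auto simp: P_def)
qed

lemma shell_bound:
  fixes g :: "'a::euclidean_space \<Rightarrow> real" and x :: 'a and m :: "nat \<Rightarrow> real"
  assumes meas: "g \<in> borel_measurable lborel"
    and nonneg: "\<And>y. 0 \<le> g y"
    and supp: "\<And>y. y \<notin> ball x 1 \<Longrightarrow> g y = 0"
    and gx: "g x = 0"
    and bnd: "\<And>k y. (1/2)^(Suc k) \<le> dist x y \<Longrightarrow> dist x y < (1/2)^k \<Longrightarrow> g y \<le> m k"
    and mnn: "\<And>k. 0 \<le> m k"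
    and summ: "summable (\<lambda>k. m k * (1/2)^(k * DIM('a)))"
  shows "integrable lborel g \<and> integral\<^sup>L lborel g \<le> unit_ball_vol (DIM('a)) * (\<Sum>k. m k * (1/2)^(k * DIM('a)))"
proof -
  define S where "S k = ball x ((1/2)^k) - ball x ((1/2)^(Suc k))" for k
  define \<omega> where "\<omega> = unit_ball_vol (DIM('a))"
  have \<omega>: "0 < \<omega>" by (simp add: \<omega>_def)
  have S_sets[measurable]: "S k \<in> sets lborel" for k by (simp add: S_def)
  have pt: "ennreal (g y) \<le> (\<Sum>k. ennreal (m k) * indicator (S k) y)" for y
  proof (cases "y \<in> ball x 1 \<and> y \<noteq> x")
    case True
    then have "0 < dist x y" "dist x y < 1" by auto
    then obtain k where k: "(1/2)^(Suc k) \<le> dist x y" "dist x y < (1/2)^k" using dyadic_shell by blast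
    then have "y \<in> S k" by (auto simp: S_def)
    then have "ennreal (g y) \<le> ennreal (m k) * indicator (S k) y" using bnd[OF k] by (simp add: ennreal_leI)
    also have "\<dots> \<le> (\<Sum>k. ennreal (m k) * indicator (S k) y)"
      using ennreal_suminf_lessD not_le by blast
    finally show ?thesis .
  next
    case False
    then have "g y = 0" using supp gx by auto
    then show ?thesis by simp
  qed
  have "(\<integral>\<^sup>+ y. ennreal (g y) \<partial>lborel) \<le> (\<integral>\<^sup>+ y. (\<Sum>k. ennreal (m k) * indicator (S k) y) \<partial>lborel)"
    by (rule nn_integral_mono) (use pt in auto)
  also have "\<dots> = (\<Sum>k. \<integral>\<^sup>+ y. ennreal (m k) * indicator (S k) y \<partial>lborel)"
    by (rule nn_integral_suminf) auto
  also have "\<dots> = (\<Sum>k. ennreal (m k) * emeasure lborel (S k))"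
    by (rule suminf_cong, rule nn_integral_cmult_indicator) (simp add: S_def)
  also have "\<dots> \<le> (\<Sum>k. ennreal (\<omega> * (m k * (1/2)^(k * DIM('a)))))"
  proof (rule suminf_le)
    fix k
    have "emeasure lborel (S k) \<le> emeasure lborel (ball x ((1/2)^k))"
      by (rule emeasure_mono) (auto simp: S_def)
    also have "\<dots> = ennreal (\<omega> * (1/2)^(k * DIM('a)))"
      by (simp add: emeasure_ball \<omega>_def power_mult[symmetric] mult.commute)
    finally have "ennreal (m k) * emeasure lborel (S k) \<le> ennreal (m k) * ennreal (\<omega> * (1/2)^(k * DIM('a)))"
      by (rule mult_left_mono) simp
    then show "ennreal (m k) * emeasure lborel (S k) \<le> ennreal (\<omega> * (m k * (1/2)^(k * DIM('a))))"
      using mnn[of k] \<omega> by (simp add: ennreal_mult'[symmetric] ac_simps)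
  qed auto
  also have "\<dots> = ennreal (\<Sum>k. \<omega> * (m k * (1/2)^(k * DIM('a))))"
    by (rule suminf_ennreal2) (use mnn \<omega> summ in \<open>auto intro: summable_mult\<close>)
  also have "\<dots> = ennreal (\<omega> * (\<Sum>k. m k * (1/2)^(k * DIM('a))))"
    by (simp add: suminf_mult summ)
  finally have I: "(\<integral>\<^sup>+ y. ennreal (g y) \<partial>lborel) \<le> ennreal (\<omega> * (\<Sum>k. m k * (1/2)^(k * DIM('a))))" .
  have int: "integrable lborel g"
  proof (rule integrableI_nonneg)
    show "(\<integral>\<^sup>+ y. ennreal (g y) \<partial>lborel) < \<infinity>"
      using le_less_trans[OF I ennreal_less_top] by simp
  qed (use meas nonneg in auto)
  have "integral\<^sup>L lborel g = enn2real (\<integral>\<^sup>+ y. ennreal (g y) \<partial>lborel)"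
    by (rule integral_eq_nn_integral) (use meas nonneg in auto)
  also have "\<dots> \<le> \<omega> * (\<Sum>k. m k * (1/2)^(k * DIM('a)))"
  proof (rule enn2real_leI[OF _ I])
    have "0 \<le> (\<Sum>k. m k * (1/2)^(k * DIM('a)))"
      by (rule suminf_nonneg[OF summ]) (simp add: mnn)
    then show "0 \<le> \<omega> * (\<Sum>k. m k * (1/2)^(k * DIM('a)))" using \<omega> by simp
  qed
  finally show ?thesis using int by (simp add: \<omega>_def)
qed

definition Phi :: "real \<Rightarrow> real \<Rightarrow> real" where
  "Phi \<alpha> t = ell (max t 0) powr \<alpha>"

lemma ln2_half: "1/2 \<le> ln (2::real)" using ln2_ge_two_thirds by simp

lemma ell_pos_eq: "0 < t \<Longrightarrow> ell t = 1 / (- ln (min t (1/10)))"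
proof -
  assume t: "0 < t"
  have "ln (min t (1/10)) < 0" using t by (intro ln_less_zero) auto
  then show ?thesis using t by (simp add: ell_def)
qed

lemma ell_nonneg: "0 \<le> ell t" by (simp add: ell_def min_def)

lemma powr_neg_le1: "1 \<le> (b::real) \<Longrightarrow> 0 \<le> \<alpha> \<Longrightarrow> b powr (- \<alpha>) \<le> 1"
  using powr_mono[of "-\<alpha>" 0 b] by simp

lemma ell_mono: "mono (\<lambda>t. ell (max t 0))"
proof (rule monoI)
  fix s t :: real assume st: "s \<le> t"
  show "ell (max s 0) \<le> ell (max t 0)"
  proof (cases "s \<le> 0")
    case True
    then have "ell (max s 0) = 0" by (simp add: ell_def)
    moreover have "0 \<le> ell (max t 0)" by (simp add: ell_def min_def)
    ultimately show ?thesis by simp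
  next
    case False
    then have s: "0 < s" "0 < t" using st by auto
    have l1: "ln (min s (1/10)) < 0" "ln (min t (1/10)) < 0" using s by (auto intro: ln_less_zero)
    have "ln (min s (1/10)) \<le> ln (min t (1/10))" using s st by (auto simp: min_def)
    then have "1 / (- ln (min s (1/10))) \<le> 1 / (- ln (min t (1/10)))"
      using l1 by (intro frac_le) auto
    then have "ell s \<le> ell t" using s by (simp add: ell_pos_eq)
    moreover have "max s 0 = s" "max t 0 = t" using s by auto
    ultimately show ?thesis by simp
  qed
qed

lemma Phi_mono: "0 \<le> \<alpha> \<Longrightarrow> mono (Phi \<alpha>)"
proof (rule monoI)
  fix s t :: real assume "0 \<le> \<alpha>" "s \<le> t"
  then show "Phi \<alpha> s \<le> Phi \<alpha> t" unfolding Phi_def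
    using monoD[OF ell_mono \<open>s \<le> t\<close>] by (intro powr_mono2) (auto simp: ell_nonneg)
qed

lemma Phi_nonneg: "0 \<le> Phi \<alpha> t" by (simp add: Phi_def)

lemma Phi_zero: "t \<le> 0 \<Longrightarrow> Phi \<alpha> t = 0" by (simp add: Phi_def ell_def)

lemma Phi_eq: "0 < t \<Longrightarrow> Phi \<alpha> t = (- ln (min t (1/10))) powr (- \<alpha>)"
proof -
  assume t: "0 < t"
  define u where "u = - ln (min t (1/10))"
  have "ln (min t (1/10)) < 0" using t by (intro ln_less_zero) auto
  then have u: "0 < u" by (simp add: u_def)
  have "Phi \<alpha> t = (1 / u) powr \<alpha>" using t by (simp add: Phi_def ell_pos_eq u_def)
  also have "\<dots> = 1 / u powr \<alpha>" using u by (simp add: powr_divide)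
  also have "\<dots> = u powr (- \<alpha>)" by (simp add: powr_minus_divide)
  finally show ?thesis by (simp add: u_def)
qed

lemma Phi_le1: "0 \<le> \<alpha> \<Longrightarrow> Phi \<alpha> t \<le> 1"
proof (cases "t \<le> 0")
  case True then show ?thesis by (simp add: Phi_zero)
next
  case False
  assume a: "0 \<le> \<alpha>"
  have "ln (min t (1/10)) \<le> ln (1/10)" using False by (subst ln_le_cancel_iff) auto
  then have "ln 10 \<le> - ln (min t (1/10))" by (simp add: ln_div)
  moreover have "1 \<le> ln (10::real)" using ln_ge_iff[of 10 1] exp_le by auto
  ultimately have "1 \<le> - ln (min t (1/10))" by simp
  then show ?thesis using False a by (simp add: Phi_eq powr_neg_le1)
qed

lemma Phi_measurable[measurable]: "0 \<le> \<alpha> \<Longrightarrow> Phi \<alpha> \<in> borel_measurable borel"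
  by (rule borel_measurable_mono[OF Phi_mono])

lemma E1a:
  fixes a b \<alpha> :: real
  assumes "0 < \<alpha>" "\<alpha> \<le> 1" "1 \<le> b" "b \<le> a"
  shows "b powr (- \<alpha>) - a powr (- \<alpha>) \<le> 1 - b / a"
proof -
  have ab: "a powr (- \<alpha>) = b powr (- \<alpha>) * (b / a) powr \<alpha>"
  proof -
    have "0 < a powr \<alpha>" "0 < b powr \<alpha>" using assms by auto
    then show ?thesis using assms by (simp add: powr_minus powr_divide field_simps)
  qed
  have q: "0 < b / a" "b / a \<le> 1" using assms by auto
  have "b / a \<le> (b / a) powr \<alpha>"
    using powr_mono'[of \<alpha> 1 "b/a"] q assms by simp
  moreover have "(b / a) powr \<alpha> \<le> 1" using q assms by (simp add: powr_le1)
  moreover have "b powr (- \<alpha>) \<le> 1" "0 \<le> b powr (-\<alpha>)" using assms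
    by (auto simp: powr_neg_le1)
  ultimately have "b powr (- \<alpha>) * (1 - (b / a) powr \<alpha>) \<le> 1 * (1 - b / a)"
    by (intro mult_mono) auto
  then show ?thesis by (simp add: ab algebra_simps)
qed

lemma E1b:
  fixes a b \<alpha> :: real
  assumes "0 < \<alpha>" "\<alpha> \<le> 1/4" "1 \<le> b" "b \<le> a"
  shows "b powr (- \<alpha>) - a powr (- \<alpha>) \<le> 4 * \<alpha> * a powr (1/2 - \<alpha>) / sqrt b"
proof -
  define t where "t = a / b"
  have t1: "1 \<le> t" using assms by (simp add: t_def)
  have ab: "a powr (- \<alpha>) = b powr (- \<alpha>) * (1/t) powr \<alpha>"
  proof -
    have "0 < a powr \<alpha>" "0 < b powr \<alpha>" using assms by auto
    then show ?thesis using assms by (simp add: t_def powr_minus powr_divide field_simps)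
  qed
  have "(1/t) powr \<alpha> = exp (\<alpha> * ln (1/t))" using t1 by (simp add: powr_def)
  also have "\<dots> \<ge> 1 + \<alpha> * ln (1/t)" by (rule exp_ge_add_one_self)
  finally have e: "1 - (1/t) powr \<alpha> \<le> \<alpha> * ln t" using t1 by (simp add: ln_div)
  have lnt: "ln t \<le> 4 * t powr (1/4)"
  proof -
    have "ln (t powr (1/4)) \<le> t powr (1/4) - 1" using t1 by (intro ln_le_minus_one) simp
    then show ?thesis using t1 by simp
  qed
  have bt: "b powr (- \<alpha>) = a powr (- \<alpha>) * t powr \<alpha>"
  proof -
    have "0 < a powr \<alpha>" "0 < b powr \<alpha>" using assms by auto
    then show ?thesis using assms by (simp add: t_def powr_minus powr_divide field_simps)
  qed
  have ta: "t powr \<alpha> \<le> t powr (1/4)" using t1 assms by (intro powr_mono) auto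
  have "b powr (- \<alpha>) - a powr (- \<alpha>) = b powr (- \<alpha>) * (1 - (1/t) powr \<alpha>)" by (simp add: ab algebra_simps)
  also have "\<dots> \<le> b powr (- \<alpha>) * (\<alpha> * ln t)" by (rule mult_left_mono[OF e]) simp
  also have "\<dots> = \<alpha> * a powr (- \<alpha>) * (t powr \<alpha> * ln t)" by (simp add: bt)
  also have "\<dots> \<le> \<alpha> * a powr (- \<alpha>) * (t powr (1/4) * (4 * t powr (1/4)))"
    using assms t1 ta lnt by (intro mult_left_mono mult_mono) auto
  also have "\<alpha> * a powr (- \<alpha>) * (t powr (1/4) * (4 * t powr (1/4))) = 4 * \<alpha> * a powr (1/2 - \<alpha>) / sqrt b"
  proof -
    have "t powr (1/4) * t powr (1/4) = t powr (1/4 + 1/4)" by (rule powr_add[symmetric])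
    then have 1: "t powr (1/4) * (4 * t powr (1/4)) = 4 * t powr (1/2)" by simp
    have 2: "t powr (1/2) = sqrt a / sqrt b"
      using t1 assms by (simp add: powr_half_sqrt t_def real_sqrt_divide)
    have 3: "a powr (- \<alpha>) * a powr (1/2) = a powr (1/2 - \<alpha>)"
      by (subst powr_add[symmetric]) simp
    have 4: "sqrt a = a powr (1/2)" using assms by (simp add: powr_half_sqrt)
    have "\<alpha> * a powr (- \<alpha>) * (t powr (1/4) * (4 * t powr (1/4))) = 4 * \<alpha> * (a powr (- \<alpha>) * sqrt a) / sqrt b"
      unfolding 1 2 by simp
    also have "\<dots> = 4 * \<alpha> * a powr (1/2 - \<alpha>) / sqrt b" unfolding 4 3 ..
    finally show ?thesis .
  qed
  finally show ?thesis by (simp add: mult.assoc)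
qed

lemma ln10_ge1: "1 \<le> ln (10::real)"
  using ln_ge_iff[of 10 1] exp_le by auto

lemma Phi_diff:
  assumes "0 < \<alpha>" "\<alpha> \<le> 1" "0 < u" "u \<le> v" "v \<le> 1/10"
  shows "Phi \<alpha> v - Phi \<alpha> u \<le> (ln v - ln u) / (- ln u)"
proof -
  have lv: "ln v \<le> ln (1/10)" using assms by simp
  then have b1: "1 \<le> - ln v" using ln10_ge1 by (simp add: ln_div)
  have "ln u \<le> ln v" using assms by simp
  then have ba: "- ln v \<le> - ln u" by simp
  have "Phi \<alpha> v = (- ln v) powr (- \<alpha>)" "Phi \<alpha> u = (- ln u) powr (- \<alpha>)"
    using assms by (auto simp: Phi_eq min_def)
  then have "Phi \<alpha> v - Phi \<alpha> u \<le> 1 - (- ln v) / (- ln u)"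
    using E1a[OF assms(1,2) b1 ba] by simp
  also have "\<dots> = (ln v - ln u) / (- ln u)" using b1 ba by (simp add: field_simps)
  finally show ?thesis .
qed

lemma div_le_self: "0 \<le> x \<Longrightarrow> 1 \<le> c \<Longrightarrow> x / c \<le> (x::real)"
  using divide_left_mono[of 1 c x] by simp

lemma H_inner:
  fixes \<rho> \<alpha> d :: real
  assumes "0 < \<alpha>" "\<alpha> \<le> 1" "0 < \<rho>" "2 * \<rho> \<le> 1/10" "0 \<le> d" "d \<le> \<rho>"
  shows "Phi \<alpha> (\<rho> + d) - Phi \<alpha> \<rho> \<le> d / (\<rho> * (- ln \<rho>))"
proof -
  have lp: "0 < - ln \<rho>" using assms by simp
  have "Phi \<alpha> (\<rho> + d) - Phi \<alpha> \<rho> \<le> (ln (\<rho> + d) - ln \<rho>) / (- ln \<rho>)"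
    using assms by (intro Phi_diff) auto
  moreover have "ln (\<rho> + d) - ln \<rho> = ln (1 + d / \<rho>)"
  proof -
    have e: "1 + d / \<rho> = (\<rho> + d) / \<rho>" using assms by (simp add: field_simps)
    show ?thesis unfolding e using assms by (subst ln_div) auto
  qed
  moreover have "ln (1 + d / \<rho>) \<le> d / \<rho>" using assms by (intro ln_add_one_self_le_self) auto
  ultimately have "Phi \<alpha> (\<rho> + d) - Phi \<alpha> \<rho> \<le> (d / \<rho>) / (- ln \<rho>)"
    using lp divide_right_mono[of "ln (1 + d / \<rho>)" "d / \<rho>" "- ln \<rho>"] by simp
  then show ?thesis by simp
qed

lemma Phi_lip:
  fixes \<rho> \<alpha> s :: real
  assumes "0 < \<alpha>" "\<alpha> \<le> 1" "0 < \<rho>" "2 * \<rho> \<le> 1/10" "1 \<le> - ln \<rho>" "\<bar>s - \<rho>\<bar> \<le> \<rho> / 2"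
  shows "\<bar>Phi \<alpha> s - Phi \<alpha> \<rho>\<bar> \<le> 2 * \<bar>s - \<rho>\<bar> / \<rho>"
proof (cases "\<rho> \<le> s")
  case True
  have "Phi \<alpha> s - Phi \<alpha> \<rho> \<le> (ln s - ln \<rho>) / (- ln \<rho>)"
    using assms True by (intro Phi_diff) auto
  also have "\<dots> \<le> ln s - ln \<rho>"
    using assms True by (intro div_le_self) auto
  also have "ln s - ln \<rho> = ln (s / \<rho>)" using assms True by (simp add: ln_div)
  also have "\<dots> \<le> s / \<rho> - 1" using assms True by (intro ln_le_minus_one) auto
  also have "\<dots> = (s - \<rho>) / \<rho>" using assms by (simp add: field_simps)
  finally have 1: "Phi \<alpha> s - Phi \<alpha> \<rho> \<le> (s - \<rho>) / \<rho>" .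
  have "Phi \<alpha> \<rho> \<le> Phi \<alpha> s" using monoD[OF Phi_mono True] assms by simp
  then show ?thesis using 1 True assms by (simp add: field_simps)
next
  case False
  have "\<rho> - s \<le> \<bar>s - \<rho>\<bar>" by simp
  then have s0: "0 < s" using assms(3,6) by linarith
  have "Phi \<alpha> \<rho> - Phi \<alpha> s \<le> (ln \<rho> - ln s) / (- ln s)"
    using assms False s0 by (intro Phi_diff) auto
  also have "\<dots> \<le> ln \<rho> - ln s"
  proof -
    have "ln s \<le> ln \<rho>" using False s0 by simp
    then have "1 \<le> - ln s" using assms(5) by linarith
    moreover have "0 \<le> ln \<rho> - ln s" using False s0 by simp
    ultimately show ?thesis by (intro div_le_self) auto
  qed
  also have "ln \<rho> - ln s = ln (\<rho> / s)" using assms s0 by (simp add: ln_div)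
  also have "\<dots> \<le> \<rho> / s - 1" using assms s0 by (intro ln_le_minus_one) auto
  also have "\<dots> = (\<rho> - s) / s" using s0 by (simp add: field_simps)
  also have "\<dots> \<le> (\<rho> - s) / (\<rho> / 2)" using False assms s0 by (intro divide_left_mono) auto
  also have "(\<rho> - s) / (\<rho> / 2) = 2 * (\<rho> - s) / \<rho>" by simp
  finally have 1: "Phi \<alpha> \<rho> - Phi \<alpha> s \<le> 2 * (\<rho> - s) / \<rho>" .
  have "Phi \<alpha> s \<le> Phi \<alpha> \<rho>" using monoD[OF Phi_mono, of \<alpha> s \<rho>] False assms by simp
  then show ?thesis using 1 False assms by (simp add: field_simps)
qed

lemma H_main:
  fixes \<rho> \<alpha> :: real and k :: nat
  assumes "0 < \<alpha>" "\<alpha> \<le> 1/4" "0 < \<rho>" "\<rho> \<le> 1/10" "\<rho> \<le> (1/2)^k"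
  shows "Phi \<alpha> (\<rho> + (1/2)^k) - Phi \<alpha> \<rho> \<le> 9 * \<alpha> * (- ln \<rho>) powr (1/2 - \<alpha>) / sqrt (k + 1)"
proof -
  define d :: real where "d = (1/2)^k"
  have d0: "0 < d" by (simp add: d_def)
  define a where "a = - ln \<rho>"
  define b where "b = - ln (min (2 * d) (1/10))"
  have "Phi \<alpha> (\<rho> + d) \<le> Phi \<alpha> (2 * d)" using assms by (intro monoD[OF Phi_mono]) (auto simp: d_def)
  moreover have "Phi \<alpha> (2 * d) = b powr (- \<alpha>)" using d0 by (simp add: Phi_eq b_def)
  moreover have "Phi \<alpha> \<rho> = a powr (- \<alpha>)" using assms by (simp add: Phi_eq a_def min_def)
  moreover have b1: "1 \<le> b"
  proof -
    have "ln (min (2 * d) (1/10)) \<le> ln (1/10)" using d0 by (subst ln_le_cancel_iff) auto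
    then show ?thesis using ln10_ge1 by (simp add: b_def ln_div)
  qed
  moreover have ba: "b \<le> a"
  proof -
    have "ln \<rho> \<le> ln (min (2 * d) (1/10))" using assms d0 by (subst ln_le_cancel_iff) (auto simp: d_def)
    then show ?thesis by (simp add: a_def b_def)
  qed
  ultimately have 1: "Phi \<alpha> (\<rho> + d) - Phi \<alpha> \<rho> \<le> 4 * \<alpha> * a powr (1/2 - \<alpha>) / sqrt b"
    using E1b[OF assms(1,2) b1 ba] by simp
  have bk: "(k + 1) / 5 \<le> b"
  proof (cases "k \<le> 4")
    case True then show ?thesis using b1 by simp
  next
    case False
    have "ln (min (2 * d) (1/10)) \<le> ln (2 * d)" using d0 by (subst ln_le_cancel_iff) auto
    also have "ln (2 * d) = ln 2 - k * ln 2" by (simp add: d_def ln_mult ln_realpow ln_div)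
    finally have "(real k - 1) * ln 2 \<le> b" by (simp add: b_def algebra_simps)
    moreover have "(k + 1) / 5 \<le> (real k - 1) * (1/2::real)" using False by simp
    moreover have "(real k - 1) * (1/2::real) \<le> (real k - 1) * ln 2" using False ln2_half by (intro mult_left_mono) auto
    ultimately show ?thesis by linarith
  qed
  have "sqrt ((k + 1) / 5) \<le> sqrt b" using bk by simp
  then have "sqrt (k + 1) / sqrt 5 \<le> sqrt b" by (simp add: real_sqrt_divide)
  then have "1 / sqrt b \<le> 1 / (sqrt (k + 1) / sqrt 5)"
    by (rule divide_left_mono) (use b1 in auto)
  then have sb: "1 / sqrt b \<le> sqrt 5 / sqrt (k + 1)" by simp
  have s5: "4 * sqrt 5 \<le> (9::real)"
  proof -
    have "sqrt 5 \<le> sqrt ((9/4::real)^2)" by (rule real_sqrt_le_mono) (simp add: power2_eq_square)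
    also have "sqrt ((9/4)^2) = (9/4::real)" by (simp only: real_sqrt_abs)
    finally show ?thesis by simp
  qed
  have ap: "0 \<le> \<alpha> * a powr (1/2 - \<alpha>)" using assms by simp
  have "4 * \<alpha> * a powr (1/2 - \<alpha>) / sqrt b = 4 * (\<alpha> * a powr (1/2 - \<alpha>)) * (1 / sqrt b)" by simp
  also have "\<dots> \<le> 4 * (\<alpha> * a powr (1/2 - \<alpha>)) * (sqrt 5 / sqrt (k + 1))"
    using sb ap by (intro mult_left_mono) auto
  also have "\<dots> = (4 * sqrt 5) * (\<alpha> * a powr (1/2 - \<alpha>)) / sqrt (k + 1)" by simp
  also have "\<dots> \<le> 9 * (\<alpha> * a powr (1/2 - \<alpha>)) / sqrt (k + 1)"
    using s5 ap by (intro divide_right_mono mult_right_mono) auto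
  finally show ?thesis using 1 by (simp add: d_def a_def mult.assoc)
qed

lemma sqrt_sum: "(\<Sum>k<n. 1 / sqrt (real k + 1)) \<le> 2 * sqrt (real n)"
proof (induction n)
  case 0 then show ?case by simp
next
  case (Suc n)
  define s where "s = sqrt (real n)"
  define t where "t = sqrt (real n + 1)"
  have s0: "0 \<le> s" and t0: "0 < t" by (auto simp: s_def t_def)
  have t2: "t^2 = s^2 + 1" by (simp add: s_def t_def)
  have "0 \<le> (t - s)^2" by simp
  then have "2 * s * t \<le> s^2 + t^2" by (simp add: power2_eq_square algebra_simps)
  then have "1 \<le> 2 * (t - s) * t" using t2 by (simp add: power2_eq_square algebra_simps)
  then have "1 / t \<le> 2 * (t - s)" using t0 by (simp add: divide_le_eq)
  then have "2 * s + 1 / t \<le> 2 * t" by simp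
  then show ?case using Suc.IH by (simp add: s_def t_def add.commute)
qed

lemma tsum_bound:
  fixes \<alpha> \<rho> :: real
  assumes al: "0 < \<alpha>" "\<alpha> \<le> 1/4" and rho: "0 < \<rho>" and a8: "8 \<le> - ln \<rho>"
  defines "a \<equiv> - ln \<rho>"
  defines "t \<equiv> (\<lambda>k::nat. if \<rho> \<le> (1/2)^k then 9 * \<alpha> * a powr (1/2 - \<alpha>) / sqrt (real k + 1)
                          else (1/2)^k / (\<rho> * a))"
  shows "summable t \<and> suminf t \<le> 32 * \<alpha> * a powr (1 - \<alpha>) + 2 / a"
proof -
  have a_ge: "8 \<le> a" using a8 by (simp add: a_def)
  have "ln \<rho> < 0" using a_ge by (simp add: a_def)
  then have r1: "\<rho> < 1" using rho by (simp add: ln_less_zero_iff)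
  obtain n where n: "(1/2::real)^n < \<rho>" using real_arch_pow_inv[of \<rho> "1/2"] rho by auto
  define P where "P = (\<lambda>k. (1/2::real)^k < \<rho>)"
  define k0 where "k0 = (LEAST k. P k)"
  have Pk0: "P k0" unfolding k0_def by (rule LeastI[of P n]) (simp add: P_def n)
  have iff: "\<rho> \<le> (1/2)^k \<longleftrightarrow> k < k0" for k
  proof
    assume h: "\<rho> \<le> (1/2)^k"
    show "k < k0"
    proof (rule ccontr)
      assume nk: "\<not> k < k0"
      have "(1/2::real)^k \<le> (1/2)^k0" by (rule power_decreasing) (use nk in auto)
      moreover have "(1/2::real)^k0 < \<rho>" using Pk0 by (simp add: P_def)
      ultimately show False using h by linarith
    qed
  next
    assume "k < k0"
    then have "\<not> P k" unfolding k0_def by (rule not_less_Least)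
    then show "\<rho> \<le> (1/2)^k" by (simp add: P_def)
  qed
  have tshift: "t (m + k0) = ((1/2)^k0 / (\<rho> * a)) * (1/2)^m" for m
    using iff[of "m + k0"] by (simp add: t_def power_add)
  have sh: "summable (\<lambda>m. t (m + k0))"
    unfolding tshift by (intro summable_mult summable_geometric) simp
  then have summ: "summable t" by (simp add: summable_iff_shift)
  have "(\<Sum>m. t (m + k0)) = ((1/2)^k0 / (\<rho> * a)) * 2"
    unfolding tshift by (subst suminf_mult) (auto simp: suminf_geometric)
  also have "\<dots> \<le> 2 / a"
  proof -
    have "(1/2)^k0 < \<rho>" using Pk0 by (simp add: P_def)
    then have "(1/2)^k0 / \<rho> \<le> 1" using rho by simp
    then show ?thesis using a_ge rho by (simp add: field_simps)
  qed
  finally have tail: "(\<Sum>m. t (m + k0)) \<le> 2 / a" .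
  have k0pos: "0 < k0"
  proof (rule ccontr)
    assume "\<not> 0 < k0" then have "k0 = 0" by simp
    then show False using Pk0 r1 by (simp add: P_def)
  qed
  have "\<rho> \<le> (1/2)^(k0 - 1)" using iff[of "k0 - 1"] k0pos by simp
  then have "ln \<rho> \<le> ln ((1/2)^(k0 - 1))" using rho by simp
  also have "ln ((1/2::real)^(k0 - 1)) = - (real (k0 - 1) * ln 2)" by (simp add: ln_realpow ln_div)
  finally have "real (k0 - 1) * ln 2 \<le> a" by (simp add: a_def)
  moreover have "real (k0 - 1) * (1/2) \<le> real (k0 - 1) * ln 2" using ln2_half by (intro mult_left_mono) auto
  ultimately have "real (k0 - 1) \<le> 2 * a" by simp
  then have k0a: "real k0 \<le> 3 * a" using k0pos a_ge by (simp add: of_nat_diff)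
  have c0: "0 \<le> 9 * \<alpha> * a powr (1/2 - \<alpha>)" using al by simp
  have "(\<Sum>k<k0. t k) = (\<Sum>k<k0. 9 * \<alpha> * a powr (1/2 - \<alpha>) * (1 / sqrt (real k + 1)))"
    using iff by (intro sum.cong) (auto simp: t_def)
  also have "\<dots> = 9 * \<alpha> * a powr (1/2 - \<alpha>) * (\<Sum>k<k0. 1 / sqrt (real k + 1))"
    by (simp add: sum_distrib_left)
  also have "\<dots> \<le> 9 * \<alpha> * a powr (1/2 - \<alpha>) * (2 * sqrt (3 * a))"
  proof -
    have "(\<Sum>k<k0. 1 / sqrt (real k + 1)) \<le> 2 * sqrt (3 * a)"
      using sqrt_sum[of k0] k0a by (meson order_trans mult_left_mono real_sqrt_le_mono zero_le_numeral)
    then show ?thesis using c0 by (rule mult_left_mono)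
  qed
  also have "\<dots> = 18 * sqrt 3 * \<alpha> * (a powr (1/2 - \<alpha>) * sqrt a)"
    by (simp add: real_sqrt_mult)
  also have "a powr (1/2 - \<alpha>) * sqrt a = a powr (1 - \<alpha>)"
  proof -
    have "sqrt a = a powr (1/2)" using a_ge by (simp add: powr_half_sqrt)
    then show ?thesis by (simp add: powr_add[symmetric])
  qed
  also have "18 * sqrt 3 * \<alpha> * a powr (1 - \<alpha>) \<le> 32 * \<alpha> * a powr (1 - \<alpha>)"
  proof -
    have "sqrt 3 \<le> sqrt ((16/9::real)^2)" by (rule real_sqrt_le_mono) (simp add: power2_eq_square)
    also have "sqrt ((16/9)^2) = (16/9::real)" by (simp only: real_sqrt_abs)
    finally have "18 * sqrt 3 \<le> (32::real)" by simp
    then show ?thesis using al by (intro mult_right_mono) auto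
  qed
  finally have head: "(\<Sum>k<k0. t k) \<le> 32 * \<alpha> * a powr (1 - \<alpha>)" .
  have "suminf t = (\<Sum>m. t (m + k0)) + (\<Sum>k<k0. t k)"
    by (rule suminf_split_initial_segment[OF summ])
  then show ?thesis using summ head tail by simp
qed

lemma pc_alg: "0 < (S::real) \<Longrightarrow> c / (3 * S)^n * (w * S^n) = c * w / 3^n"
  by (simp add: power_mult_distrib field_simps)

lemma inv_pow_shell:
  fixes d :: real assumes "(1/2)^(Suc k) \<le> d"
  shows "1 / d ^ n \<le> 1 / ((1/2)^(Suc k))^n"
proof -
  have "0 < ((1/2::real)^(Suc k))^n" by simp
  moreover have "0 < d" using assms zero_less_power[of "1/2::real" "Suc k"] by linarith
  moreover have "((1/2)^(Suc k))^n \<le> d ^ n" using assms by (intro power_mono) auto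
  ultimately show ?thesis by (intro divide_left_mono) auto
qed

context
  fixes lam Lam \<alpha> r :: real and x :: "'a::euclidean_space" and K :: "'a \<Rightarrow> 'a \<Rightarrow> real"
  assumes lam: "0 < lam" "lam \<le> Lam" and al: "0 < \<alpha>" "\<alpha> \<le> 1/4"
    and r: "0 < r" "r < 1" and xr: "r < norm x" "norm x - r < r^2"
    and a8: "8 \<le> - ln (norm x - r)"
    and Kb: "\<forall>z\<in>ball 0 1. lam \<le> K x z \<and> K x z \<le> Lam"
begin

abbreviation "\<rho> \<equiv> norm x - r"
abbreviation "a \<equiv> - ln (norm x - r)"
abbreviation "phi \<equiv> (\<lambda>y. Phi \<alpha> (norm y - r))"
abbreviation "FF \<equiv> (\<lambda>y. (phi x - phi y) / norm (y - x) ^ DIM('a) * K x (y - x))"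
abbreviation "ff \<equiv> (\<lambda>y. indicator (ball x 1) y *\<^sub>R FF y)"

lemma rho_pos: "0 < \<rho>" using xr by simp

lemma rho_small: "2 * \<rho> \<le> 1/10"
proof -
  have "ln \<rho> \<le> -8" using a8 by simp
  moreover have "\<rho> = exp (ln \<rho>)" using rho_pos by simp
  ultimately have "\<rho> \<le> exp (-8)" by (metis exp_le_cancel_iff)
  also have "exp (-8::real) \<le> 1/20"
  proof -
    have "(20::real) \<le> 1 + 8 + 8^2/2" by simp
    also have "\<dots> \<le> exp 8" by (rule exp_lower_Taylor_quadratic) simp
    finally show ?thesis by (simp add: exp_minus field_simps)
  qed
  finally show ?thesis by simp
qed

lemma a_ge1: "1 \<le> a" using a8 by simp

lemma K_bounds: "y \<in> ball x 1 \<Longrightarrow> lam \<le> K x (y - x) \<and> K x (y - x) \<le> Lam"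
  using Kb by (auto simp: dist_norm norm_minus_commute)

lemma phi_bounds: "0 \<le> phi y" "phi y \<le> 1"
  using al by (auto simp: Phi_nonneg Phi_le1)

lemma phi_diff_bound:
  assumes "dist x y < (1/2)^k"
  shows "\<bar>phi x - phi y\<bar> \<le> 2 * (1/2)^k / \<rho>"
proof -
  have dd: "\<bar>(norm y - r) - \<rho>\<bar> \<le> dist x y"
    using norm_triangle_ineq3[of y x] by (simp add: dist_norm norm_minus_commute)
  show ?thesis
  proof (cases "dist x y \<le> \<rho> / 2")
    case True
    have "\<bar>phi y - phi x\<bar> \<le> 2 * \<bar>(norm y - r) - \<rho>\<bar> / \<rho>"
      using al rho_pos rho_small a_ge1 dd True by (intro Phi_lip) auto
    also have "\<dots> \<le> 2 * (1/2)^k / \<rho>"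
      using dd assms rho_pos by (intro divide_right_mono) auto
    finally show ?thesis by (simp add: abs_minus_commute)
  next
    case False
    have "\<bar>phi x - phi y\<bar> \<le> 1" using phi_bounds[of x] phi_bounds[of y] by linarith
    also have "1 \<le> 2 * dist x y / \<rho>" using False rho_pos by (simp add: field_simps)
    also have "\<dots> \<le> 2 * (1/2)^k / \<rho>" using assms rho_pos by (intro divide_right_mono) auto
    finally show ?thesis .
  qed
qed

lemma ff_abs_bound:
  assumes "(1/2)^(Suc k) \<le> dist x y" "dist x y < (1/2)^k"
  shows "\<bar>ff y\<bar> \<le> Lam * (2 * (1/2)^k / \<rho>) / ((1/2)^(Suc k))^DIM('a)"
proof (cases "y \<in> ball x 1")
  case False
  then show ?thesis using lam rho_pos by simp
next
  case True
  have d: "norm (y - x) = dist x y" by (simp add: dist_norm norm_minus_commute)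
  have dpos: "0 < dist x y" using assms(1) zero_less_power[of "1/2::real" "Suc k"] by linarith
  have Kx: "0 \<le> K x (y - x)" "K x (y - x) \<le> Lam" using K_bounds[OF True] lam by auto
  have "\<bar>ff y\<bar> = \<bar>phi x - phi y\<bar> * (1 / dist x y ^ DIM('a)) * K x (y - x)"
    using True Kx by (simp add: d abs_mult)
  also have "\<dots> \<le> (2 * (1/2)^k / \<rho>) * (1 / ((1/2)^(Suc k))^DIM('a)) * Lam"
    using phi_diff_bound[OF assms(2)] inv_pow_shell[OF assms(1)] Kx dpos rho_pos
    by (intro mult_mono) auto
  also have "\<dots> = Lam * (2 * (1/2)^k / \<rho>) / ((1/2)^(Suc k))^DIM('a)" by simp
  finally show ?thesis .
qed

lemma pow_ratio: "X / ((1/2::real)^(Suc k))^n * (1/2)^(k*n) = X * 2^n"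
proof -
  have "((1/2::real)^(Suc k))^n = (1/2)^(k*n) * (1/2)^n"
    by (simp only: power_Suc2 power_mult_distrib power_mult)
  then show ?thesis by (simp add: field_simps power_one_over)
qed

abbreviation "tt \<equiv> (\<lambda>k::nat. if \<rho> \<le> (1/2)^k then 9 * \<alpha> * a powr (1/2 - \<alpha>) / sqrt (real k + 1)
                          else (1/2)^k / (\<rho> * a))"

lemma tt_nonneg: "0 \<le> tt k"
proof (cases "\<rho> \<le> (1/2)^k")
  case True then show ?thesis using al by simp
next
  case False
  have "0 < \<rho> * a" by (intro mult_pos_pos) (use rho_pos a_ge1 rho_small in auto)
  then have "0 \<le> (1/2::real)^k / (\<rho> * a)" by (rule divide_nonneg_pos[rotated]) simp
  then show ?thesis using False by (simp only: if_False)
qed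

lemma H_tt: "Phi \<alpha> (\<rho> + (1/2)^k) - Phi \<alpha> \<rho> \<le> tt k"
proof (cases "\<rho> \<le> (1/2)^k")
  case True
  then show ?thesis using H_main[of \<alpha> \<rho> k] al rho_pos rho_small by (simp add: add.commute)
next
  case False
  then show ?thesis using H_inner[of \<alpha> \<rho> "(1/2)^k"] al rho_pos rho_small by simp
qed

lemma fm_bound:
  assumes "(1/2)^(Suc k) \<le> dist x y" "dist x y < (1/2)^k"
  shows "max 0 (- ff y) \<le> Lam * tt k / ((1/2)^(Suc k))^DIM('a)"
proof (cases "y \<in> ball x 1")
  case False
  then show ?thesis using lam tt_nonneg[of k] by simp
next
  case True
  have d: "norm (y - x) = dist x y" by (simp add: dist_norm norm_minus_commute)
  have dpos: "0 < dist x y" using assms(1) zero_less_power[of "1/2::real" "Suc k"] by linarith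
  have Kx: "0 \<le> K x (y - x)" "K x (y - x) \<le> Lam" using K_bounds[OF True] lam by auto
  define D where "D = max 0 (phi y - phi x)"
  have "norm y - r \<le> \<rho> + (1/2)^k"
    using norm_triangle_ineq2[of y x] assms(2) by (simp add: dist_norm norm_minus_commute)
  then have "phi y \<le> Phi \<alpha> (\<rho> + (1/2)^k)" using al by (intro monoD[OF Phi_mono]) auto
  then have D: "0 \<le> D" "D \<le> tt k" using H_tt[of k] tt_nonneg[of k] by (auto simp: D_def)
  have "ff y = (phi x - phi y) * (1 / dist x y ^ DIM('a)) * K x (y - x)"
    using True by (simp add: d)
  then have e: "- ff y = (phi y - phi x) * (1 / dist x y ^ DIM('a)) * K x (y - x)"
    by (simp add: algebra_simps)
  have "- ff y \<le> D * (1 / dist x y ^ DIM('a)) * K x (y - x)"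
    unfolding e using Kx dpos by (intro mult_right_mono) (auto simp: D_def)
  moreover have "0 \<le> D * (1 / dist x y ^ DIM('a)) * K x (y - x)" using D Kx dpos by simp
  ultimately have "max 0 (- ff y) \<le> D * (1 / dist x y ^ DIM('a)) * K x (y - x)" by simp
  also have "\<dots> \<le> tt k * (1 / ((1/2)^(Suc k))^DIM('a)) * Lam"
    using D inv_pow_shell[OF assms(1)] Kx dpos by (intro mult_mono) auto
  also have "\<dots> = Lam * tt k / ((1/2)^(Suc k))^DIM('a)" by simp
  finally show ?thesis .
qed

lemma phi_meas[measurable]: "phi \<in> borel_measurable lborel"
proof -
  have [measurable]: "Phi \<alpha> \<in> borel_measurable borel" using al by (simp add: Phi_measurable)
  show ?thesis by measurable
qed

context
  assumes Kmeas: "(\<lambda>y. K x (y - x)) \<in> borel_measurable (restrict_space lborel (ball x 1))"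
begin

lemma ff_meas[measurable]: "ff \<in> borel_measurable lborel"
  using meas_F[where K=K and x=x and \<phi>=phi, OF Kmeas phi_meas] by simp

lemma ff_integrable: "integrable lborel ff"
proof -
  define m where "m k = Lam * (2 * (1/2)^k / \<rho>) / ((1/2::real)^(Suc k))^DIM('a)" for k
  have "integrable lborel (\<lambda>y. \<bar>ff y\<bar>) \<and> True"
  proof -
    have "integrable lborel (\<lambda>y. \<bar>ff y\<bar>) \<and> integral\<^sup>L lborel (\<lambda>y. \<bar>ff y\<bar>) \<le> unit_ball_vol (DIM('a)) * (\<Sum>k. m k * (1/2)^(k * DIM('a)))"
    proof (rule shell_bound)
      show "(\<lambda>y. \<bar>ff y\<bar>) \<in> borel_measurable lborel" by measurable
      show "\<And>k. 0 \<le> m k" using lam rho_pos by (simp add: m_def)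
      show "\<bar>ff y\<bar> \<le> m k" if "(1/2)^(Suc k) \<le> dist x y" "dist x y < (1/2)^k" for k y
        using ff_abs_bound[OF that] by (simp add: m_def)
      have "(\<lambda>k. m k * (1/2)^(k * DIM('a))) = (\<lambda>k. (Lam * 2 / \<rho> * 2^DIM('a)) * (1/2)^k)"
      proof (rule ext)
        fix k
        show "m k * (1/2)^(k * DIM('a)) = (Lam * 2 / \<rho> * 2^DIM('a)) * (1/2)^k"
          unfolding m_def by (subst pow_ratio) simp
      qed
      then show "summable (\<lambda>k. m k * (1/2)^(k * DIM('a)))"
        by (simp add: summable_geometric)
    qed auto
    then show ?thesis by simp
  qed
  then show ?thesis using integrable_abs_iff[OF ff_meas] by simp
qed

lemma fm_integral:
  "integrable lborel (\<lambda>y. max 0 (- ff y)) \<and>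
   integral\<^sup>L lborel (\<lambda>y. max 0 (- ff y)) \<le> unit_ball_vol (DIM('a)) * (Lam * 2^DIM('a) * (32 * \<alpha> * a powr (1 - \<alpha>) + 2 / a))"
proof -
  define m where "m k = Lam * tt k / ((1/2::real)^(Suc k))^DIM('a)" for k
  have ts: "summable tt \<and> suminf tt \<le> 32 * \<alpha> * a powr (1 - \<alpha>) + 2 / a"
    using tsum_bound[of \<alpha> \<rho>] al rho_pos a8 by simp
  have me: "(\<lambda>k. m k * (1/2)^(k * DIM('a))) = (\<lambda>k. (Lam * 2^DIM('a)) * tt k)"
  proof (rule ext)
    fix k
    show "m k * (1/2)^(k * DIM('a)) = (Lam * 2^DIM('a)) * tt k"
      unfolding m_def by (subst pow_ratio) simp
  qed
  have summ: "summable (\<lambda>k. m k * (1/2)^(k * DIM('a)))"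
    unfolding me using ts by (intro summable_mult) simp
  have A: "integrable lborel (\<lambda>y. max 0 (- ff y)) \<and> integral\<^sup>L lborel (\<lambda>y. max 0 (- ff y)) \<le> unit_ball_vol (DIM('a)) * (\<Sum>k. m k * (1/2)^(k * DIM('a)))"
  proof (rule shell_bound)
    show "(\<lambda>y. max 0 (- ff y)) \<in> borel_measurable lborel" by measurable
    show "\<And>k. 0 \<le> m k" using lam tt_nonneg by (simp add: m_def)
    show "max 0 (- ff y) \<le> m k" if "(1/2)^(Suc k) \<le> dist x y" "dist x y < (1/2)^k" for k y
      using fm_bound[OF that] by (simp add: m_def)
  qed (use summ in auto)
  have B: "(\<Sum>k. m k * (1/2)^(k * DIM('a))) \<le> Lam * 2^DIM('a) * (32 * \<alpha> * a powr (1 - \<alpha>) + 2 / a)"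
    unfolding me using ts lam by (subst suminf_mult) (auto intro: mult_left_mono)
  have C: "unit_ball_vol (DIM('a)) * (\<Sum>k. m k * (1/2)^(k * DIM('a))) \<le> unit_ball_vol (DIM('a)) * (Lam * 2^DIM('a) * (32 * \<alpha> * a powr (1 - \<alpha>) + 2 / a))"
    by (rule mult_left_mono[OF B]) simp
  from A have I: "integrable lborel (\<lambda>y. max 0 (- ff y))" and J: "integral\<^sup>L lborel (\<lambda>y. max 0 (- ff y)) \<le> unit_ball_vol (DIM('a)) * (\<Sum>k. m k * (1/2)^(k * DIM('a)))"
    by auto
  show ?thesis using I order_trans[OF J C] by (rule conjI)
qed

end

abbreviation "ss \<equiv> (\<lambda>k::nat. 4^k * \<rho>)"
abbreviation "cc \<equiv> (\<lambda>k::nat. x - (2 * ss k / norm x) *\<^sub>R x)"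
abbreviation "DD \<equiv> (\<lambda>k::nat. ball (cc k) (ss k))"

lemma DD_props:
  assumes "3 * ss k \<le> r" "y \<in> DD k"
  shows "ss k < dist x y" "dist x y < 3 * ss k" "norm y < r" "y \<in> ball x 1"
proof -
  have x0: "0 < norm x" using xr(1) r(1) by linarith
  have s0: "0 < ss k" using rho_pos by simp
  have s1: "\<rho> \<le> ss k" using rho_pos by simp
  have xn: "x \<noteq> 0" using x0 by auto
  have dxc: "dist x (cc k) = 2 * ss k" using x0 s0 xn by (simp add: dist_norm)
  have dcy: "dist (cc k) y < ss k" using assms(2) by simp
  have "dist x y \<le> dist x (cc k) + dist (cc k) y" by (rule dist_triangle)
  then show "dist x y < 3 * ss k" using dxc dcy by simp
  have "dist x (cc k) \<le> dist x y + dist y (cc k)" by (rule dist_triangle)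
  then show "ss k < dist x y" using dxc dcy by (simp add: dist_commute)
  then show "y \<in> ball x 1" using \<open>dist x y < 3 * ss k\<close> assms(1) r by simp
  have h2: "2 * ss k \<le> norm x" using assms(1) xr(1) s0 by linarith
  have co: "0 \<le> 1 - 2 * ss k / norm x" using h2 x0 by (simp add: field_simps)
  have ceq: "cc k = (1 - 2 * ss k / norm x) *\<^sub>R x" by (simp add: algebra_simps)
  have nc1: "norm (cc k) = \<bar>1 - 2 * ss k / norm x\<bar> * norm x"
    by (subst ceq, rule norm_scaleR)
  also have "\<dots> = (1 - 2 * ss k / norm x) * norm x" using co by simp
  also have "\<dots> = norm x - 2 * ss k" using x0 by (simp add: field_simps)
  finally have nc: "norm (cc k) = norm x - 2 * ss k" .
  have "norm y \<le> norm (cc k) + dist (cc k) y"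
    using norm_triangle_ineq2[of y "cc k"] by (simp add: dist_norm norm_minus_commute)
  then show "norm y < r" using nc dcy s1 by simp
qed

lemma DD_disj:
  assumes "j < k" "3 * ss k \<le> r" "y \<in> DD j"
  shows "y \<notin> DD k"
proof
  assume yk: "y \<in> DD k"
  have "(4::real)^j \<le> 4^k" using assms(1) by (intro power_increasing) auto
  then have jk: "ss j \<le> ss k" using rho_pos by simp
  have a1: "dist x y < 3 * ss j" using DD_props[OF _ assms(3)] jk assms(2) by simp
  have a2: "ss k < dist x y" using DD_props[OF assms(2) yk] by simp
  have "(4::real)^(Suc j) \<le> 4^k" using assms(1) by (intro power_increasing) auto
  then have h: "4 * ss j \<le> ss k" using rho_pos by simp
  have "0 < ss j" using rho_pos by simp
  then show False using a1 a2 h by linarith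
qed

lemma ff_on_DD:
  assumes "3 * ss k \<le> r" "y \<in> DD k"
  shows "lam * phi x / (3 * ss k)^DIM('a) \<le> ff y"
proof -
  note P = DD_props[OF assms]
  have py: "phi y = 0" using P(3) by (simp add: Phi_zero)
  have d: "norm (y - x) = dist x y" by (simp add: dist_norm norm_minus_commute)
  have "0 < ss k" using rho_pos by simp
  then have dpos: "0 < dist x y" using P(1) by linarith
  have Kx: "lam \<le> K x (y - x)" using K_bounds[OF P(4)] by simp
  have ff: "ff y = phi x * (1 / dist x y ^ DIM('a)) * K x (y - x)"
    using P(4) py by (simp add: d)
  have "1 / (3 * ss k)^DIM('a) \<le> 1 / dist x y ^ DIM('a)"
    using P(2) dpos rho_pos by (intro divide_left_mono power_mono) auto
  then have "phi x * (1 / (3 * ss k)^DIM('a)) * lam \<le> phi x * (1 / dist x y ^ DIM('a)) * K x (y - x)"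
    using phi_bounds[of x] Kx lam by (intro mult_mono mult_left_mono) auto
  then show ?thesis unfolding ff by (simp add: mult.commute)
qed

abbreviation "pc \<equiv> (\<lambda>k::nat. lam * phi x / (3 * ss k)^DIM('a))"

lemma ss_mono: "k \<le> M \<Longrightarrow> ss k \<le> ss M"
proof -
  assume "k \<le> M"
  then have "(4::real)^k \<le> 4^M" by (intro power_increasing) auto
  then show ?thesis using rho_pos by simp
qed

lemma p0_le:
  assumes "3 * ss M \<le> r"
  shows "(\<Sum>k\<le>M. pc k * indicator (DD k) y) \<le> ff y + max 0 (- ff y)"
proof (cases "\<exists>j\<le>M. y \<in> DD j")
  case True
  then obtain j where j: "j \<le> M" "y \<in> DD j" by auto
  have r3: "3 * ss k \<le> r" if "k \<le> M" for k using ss_mono[OF that] assms by simp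
  have ind: "indicator (DD k) y = (if k = j then 1 else (0::real))" if "k \<le> M" for k
  proof (cases "k = j")
    case True then show ?thesis using j by simp
  next
    case False
    show ?thesis
    proof (cases "k < j")
      case True
      have "y \<notin> DD k"
      proof
        assume "y \<in> DD k"
        then show False using DD_disj[OF True r3[OF j(1)]] j by simp
      qed
      then show ?thesis using False by simp
    next
      case False2: False
      then have "j < k" using False by simp
      then have "y \<notin> DD k" using DD_disj[OF _ r3[OF that] j(2)] by simp
      then show ?thesis using False by simp
    qed
  qed
  have "(\<Sum>k\<le>M. pc k * indicator (DD k) y) = (\<Sum>k\<le>M. if k = j then pc k else 0)"
    by (rule sum.cong) (auto simp: ind)
  also have "\<dots> = pc j" using j by simp
  also have "\<dots> \<le> ff y" by (rule ff_on_DD[OF r3[OF j(1)] j(2)])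
  finally show ?thesis by simp
next
  case False
  then have "(\<Sum>k\<le>M. pc k * indicator (DD k) y) = 0" by (intro sum.neutral) auto
  then show ?thesis by simp
qed

lemma p0_int:
  "integrable lborel (\<lambda>y. \<Sum>k\<le>M. pc k * indicator (DD k) y) \<and>
   integral\<^sup>L lborel (\<lambda>y. \<Sum>k\<le>M. pc k * indicator (DD k) y) = (real M + 1) * (lam * phi x * unit_ball_vol (DIM('a)) / 3^DIM('a))"
proof
  have fin: "emeasure lborel (DD k) < \<infinity>" for k by (rule emeasure_bounded_finite) simp
  show "integrable lborel (\<lambda>y. \<Sum>k\<le>M. pc k * indicator (DD k) y)"
  proof (rule Bochner_Integration.integrable_sum[where f="\<lambda>k y. pc k * indicator (DD k) y"])
    fix k show "integrable lborel (\<lambda>y. pc k * indicator (DD k) y)" using fin[of k] by simp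
  qed
  have "integral\<^sup>L lborel (\<lambda>y. \<Sum>k\<le>M. pc k * indicator (DD k) y) = (\<Sum>k\<le>M. integral\<^sup>L lborel (\<lambda>y. pc k * indicator (DD k) y))"
  proof (rule Bochner_Integration.integral_sum[where f="\<lambda>k y. pc k * indicator (DD k) y"])
    fix k show "integrable lborel (\<lambda>y. pc k * indicator (DD k) y)" using fin[of k] by simp
  qed
  also have "\<dots> = (\<Sum>k\<le>M. pc k * (unit_ball_vol (DIM('a)) * ss k ^ DIM('a)))"
  proof (intro sum.cong refl)
    fix k
    have m: "measure lborel (DD k) = unit_ball_vol (DIM('a)) * ss k ^ DIM('a)" by (rule content_ball) (use rho_pos in simp)
    have "integral\<^sup>L lborel (\<lambda>y. pc k * indicator (DD k) y) = pc k * integral\<^sup>L lborel (indicator (DD k))"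
      by (rule integral_mult_right_zero)
    also have "integral\<^sup>L lborel (indicator (DD k)) = measure lborel (DD k)" by simp
    finally show "integral\<^sup>L lborel (\<lambda>y. pc k * indicator (DD k) y) = pc k * (unit_ball_vol (DIM('a)) * ss k ^ DIM('a))"
      by (simp only: m)
  qed
  also have "\<dots> = (\<Sum>k\<le>M. lam * phi x * unit_ball_vol (DIM('a)) / 3^DIM('a))"
  proof (intro sum.cong refl)
    fix k
    have "0 < ss k" using rho_pos by simp
    then show "pc k * (unit_ball_vol (DIM('a)) * ss k ^ DIM('a)) = lam * phi x * unit_ball_vol (DIM('a)) / 3^DIM('a)"
      by (rule pc_alg)
  qed
  also have "\<dots> = (real M + 1) * (lam * phi x * unit_ball_vol (DIM('a)) / 3^DIM('a))" by simp
  finally show "integral\<^sup>L lborel (\<lambda>y. \<Sum>k\<le>M. pc k * indicator (DD k) y) = (real M + 1) * (lam * phi x * unit_ball_vol (DIM('a)) / 3^DIM('a))" .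
qed

lemma LK_lower:
  assumes Kmeas: "(\<lambda>y. K x (y - x)) \<in> borel_measurable (restrict_space lborel (ball x 1))"
    and M: "3 * ss M \<le> r"
  shows "(real M + 1) * (lam * phi x * unit_ball_vol (DIM('a)) / 3^DIM('a))
           - unit_ball_vol (DIM('a)) * (Lam * 2^DIM('a) * (32 * \<alpha> * a powr (1 - \<alpha>) + 2 / a))
         \<le> LK K phi x"
proof -
  note P = p0_int[of M]
  note Fm = fm_integral[OF Kmeas]
  have "LK K phi x = integral\<^sup>L lborel ff"
    by (simp add: LK_def set_lebesgue_integral_def)
  moreover have "integral\<^sup>L lborel (\<lambda>y. (\<Sum>k\<le>M. pc k * indicator (DD k) y) - max 0 (- ff y)) \<le> integral\<^sup>L lborel ff"
  proof (rule integral_mono)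
    show "integrable lborel (\<lambda>y. (\<Sum>k\<le>M. pc k * indicator (DD k) y) - max 0 (- ff y))"
      using P Fm by (intro Bochner_Integration.integrable_diff) auto
    show "integrable lborel ff" by (rule ff_integrable[OF Kmeas])
    show "(\<Sum>k\<le>M. pc k * indicator (DD k) y) - max 0 (- ff y) \<le> ff y" for y
      using p0_le[OF M, of y] by simp
  qed
  moreover have "integral\<^sup>L lborel (\<lambda>y. (\<Sum>k\<le>M. pc k * indicator (DD k) y) - max 0 (- ff y))
      = integral\<^sup>L lborel (\<lambda>y. \<Sum>k\<le>M. pc k * indicator (DD k) y) - integral\<^sup>L lborel (\<lambda>y. max 0 (- ff y))"
    using P Fm by (intro Bochner_Integration.integral_diff) auto
  ultimately show ?thesis using P Fm by linarith
qed

end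

lemma final_num:
  fixes B W a \<alpha> :: real and M :: nat
  assumes "0 < B" "1 \<le> a" "0 < \<alpha>" "\<alpha> \<le> 1/4" "a / 12 \<le> real M + 1" "0 \<le> W"
    "W * 32 * \<alpha> \<le> B / 48" "W * 2 \<le> B * a / 48"
  shows "B / 24 \<le> (real M + 1) * (B * a powr (- \<alpha>)) - W * (32 * \<alpha> * a powr (1 - \<alpha>) + 2 / a)"
proof -
  define X where "X = a powr (1 - \<alpha>)"
  have X1: "1 \<le> X" using assms by (simp add: X_def ge_one_powr_ge_zero)
  have aX: "a * a powr (- \<alpha>) = X"
    using assms by (simp add: X_def powr_add[symmetric] powr_minus_divide[of a \<alpha>] powr_diff)
  have ap: "0 \<le> a powr (- \<alpha>)" by simp
  have "(a / 12) * (B * a powr (- \<alpha>)) \<le> (real M + 1) * (B * a powr (- \<alpha>))"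
    using assms ap by (intro mult_right_mono) auto
  moreover have "(a / 12) * (B * a powr (- \<alpha>)) = B * X / 12" using aX by (simp add: field_simps)
  ultimately have P: "B * X / 12 \<le> (real M + 1) * (B * a powr (- \<alpha>))" by linarith
  have Q1: "W * 32 * \<alpha> * X \<le> B / 48 * X" using assms X1 by (intro mult_right_mono) auto
  have "W * 2 / a \<le> B / 48" using assms by (simp add: divide_le_eq mult.commute)
  also have "\<dots> \<le> B / 48 * X" using assms X1 by simp
  finally have Q2: "W * 2 / a \<le> B / 48 * X" .
  have "W * (32 * \<alpha> * a powr (1 - \<alpha>) + 2 / a) = W * 32 * \<alpha> * X + W * 2 / a" by (simp add: X_def algebra_simps)
  then have "W * (32 * \<alpha> * a powr (1 - \<alpha>) + 2 / a) \<le> B * X / 24" using Q1 Q2 by simp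
  then have "B * X / 24 \<le> (real M + 1) * (B * a powr (- \<alpha>)) - W * (32 * \<alpha> * a powr (1 - \<alpha>) + 2 / a)"
    using P by simp
  moreover have "B / 24 \<le> B * X / 24" using X1 assms by simp
  ultimately show ?thesis by simp
qed

lemma M_bound:
  fixes \<rho> r a :: real and M :: nat
  assumes "0 < \<rho>" "0 < r" "\<rho> < r^2" "a = - ln \<rho>" "8 \<le> a" "M = nat \<lfloor>a / 12\<rfloor>"
  shows "3 * (4^M * \<rho>) \<le> r" "a / 12 \<le> real M + 1"
proof -
  have Ma: "real M \<le> a / 12" using assms(5,6) by linarith
  show "a / 12 \<le> real M + 1" using assms(5,6) by linarith
  have l4: "ln (4::real) \<le> 3" using ln_le_minus_one[of 4] by simp
  have "(4::real)^M = exp (real M * ln 4)" by (simp add: exp_of_nat_mult)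
  also have "\<dots> \<le> exp (a / 4)"
  proof -
    have "real M * ln 4 \<le> (a/12) * 3" using Ma l4 by (intro mult_mono) auto
    then show ?thesis by simp
  qed
  finally have p4: "(4::real)^M \<le> exp (a / 4)" .
  have rho: "\<rho> = exp (- a)" using assms(1,4) by simp
  have "exp (- a / 2) ^ 2 = exp (- a)" by (simp add: exp_of_nat_mult[symmetric] power2_eq_square exp_add[symmetric])
  then have "exp (- a / 2) ^ 2 < r ^ 2" using assms(3) rho by simp
  then have er: "exp (- a / 2) < r" by (rule power_less_imp_less_base[OF _ less_imp_le[OF assms(2)]])
  have e3: "3 \<le> exp (a / 4)" using exp_ge_add_one_self[of "a/4"] assms(5) by linarith
  have "3 * (4^M * \<rho>) \<le> exp (a / 4) * (exp (a / 4) * exp (- a))"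
    using p4 e3 rho by (intro mult_mono) auto
  also have "\<dots> = exp (- a / 2)" by (simp add: exp_add[symmetric])
  finally show "3 * (4^M * \<rho>) \<le> r" using er by simp
qed

theorem lemma4p17:
  fixes lam Lam :: real
  assumes "0 < lam" and "lam \<le> Lam"
  shows "\<exists>\<alpha> r0 \<delta>. \<alpha> \<in> {0<..<1} \<and> r0 \<in> {0<..<1} \<and> \<delta> \<in> {0<..<1} \<and>
    (\<forall>(r::real) (\<Omega>::'a::euclidean_space set) (K::'a \<Rightarrow> 'a \<Rightarrow> real).
       0 < r \<and> r \<le> r0 \<and>
       ball 0 (r + r^2) - cball 0 r \<subseteq> \<Omega> \<and>
       (\<lambda>p. K (fst p) (snd p)) \<in> borel_measurable (restrict_space (lborel \<Otimes>\<^sub>M lborel) (\<Omega> \<times> ball 0 1)) \<and>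
       (\<forall>x\<in>\<Omega>. \<forall>z\<in>ball 0 1. lam \<le> K x z \<and> K x z \<le> Lam)
       \<longrightarrow> (\<forall>x\<in>ball 0 (r + r^2). norm x > r \<longrightarrow>
              LK K (\<lambda>y. ell (max (norm y - r) 0) powr \<alpha>) x \<ge> \<delta>))"
proof -
  define N where "N = DIM('a)"
  define \<omega> where "\<omega> = unit_ball_vol (DIM('a))"
  have \<omega>0: "0 < \<omega>" by (simp add: \<omega>_def)
  have L0: "0 < Lam" using assms by simp
  define \<alpha> where "\<alpha> = min (1/4) (lam / (1536 * Lam * 6^N))"
  define A where "A = max 8 (96 * Lam * 6^N / lam)"
  define r0 where "r0 = exp (- A / 2)"
  define B where "B = lam * \<omega> / 3^N"
  define \<delta> where "\<delta> = min (1/2) (B / 24)"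
  have B0: "0 < B" using assms \<omega>0 by (simp add: B_def)
  have al0: "0 < \<alpha>" using assms L0 by (simp add: \<alpha>_def)
  have al4: "\<alpha> \<le> 1/4" by (simp add: \<alpha>_def)
  have A8: "8 \<le> A" by (simp add: A_def)
  have r00: "0 < r0" "r0 < 1" using A8 by (auto simp: r0_def)
  have c1: "\<alpha> \<in> {0<..<1}" using al0 al4 by simp
  have c2: "r0 \<in> {0<..<1}" using r00 by simp
  have c3: "\<delta> \<in> {0<..<1}" using B0 by (simp add: \<delta>_def)
  have main: "\<forall>(r::real) (\<Omega>::'a::euclidean_space set) (K::'a \<Rightarrow> 'a \<Rightarrow> real).
       0 < r \<and> r \<le> r0 \<and>
       ball 0 (r + r^2) - cball 0 r \<subseteq> \<Omega> \<and>
       (\<lambda>p. K (fst p) (snd p)) \<in> borel_measurable (restrict_space (lborel \<Otimes>\<^sub>M lborel) (\<Omega> \<times> ball 0 1)) \<and>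
       (\<forall>x\<in>\<Omega>. \<forall>z\<in>ball 0 1. lam \<le> K x z \<and> K x z \<le> Lam)
       \<longrightarrow> (\<forall>x\<in>ball 0 (r + r^2). norm x > r \<longrightarrow>
              LK K (\<lambda>y. ell (max (norm y - r) 0) powr \<alpha>) x \<ge> \<delta>)"
  proof (intro allI impI ballI)
    fix r :: real and \<Omega> :: "'a set" and K :: "'a \<Rightarrow> 'a \<Rightarrow> real" and x :: 'a
    assume H: "0 < r \<and> r \<le> r0 \<and> ball 0 (r + r^2) - cball 0 r \<subseteq> \<Omega> \<and>
       (\<lambda>p. K (fst p) (snd p)) \<in> borel_measurable (restrict_space (lborel \<Otimes>\<^sub>M lborel) (\<Omega> \<times> ball 0 1)) \<and>
       (\<forall>x\<in>\<Omega>. \<forall>z\<in>ball 0 1. lam \<le> K x z \<and> K x z \<le> Lam)"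
      and xb: "x \<in> ball 0 (r + r^2)" and xr: "norm x > r"
    have r0': "0 < r" "r < 1" using H r00 by auto
    have xO: "x \<in> \<Omega>" using H xb xr by auto
    have Kb: "\<forall>z\<in>ball 0 1. lam \<le> K x z \<and> K x z \<le> Lam" using H xO by auto
    have Kmeas: "(\<lambda>y. K x (y - x)) \<in> borel_measurable (restrict_space lborel (ball x 1))"
      using K_meas[of K \<Omega> x] H xO by auto
    define \<rho> where "\<rho> = norm x - r"
    define a where "a = - ln \<rho>"
    have rho0: "0 < \<rho>" using xr by (simp add: \<rho>_def)
    have rhor: "\<rho> < r^2" using xb by (simp add: \<rho>_def)
    have "ln \<rho> < ln (r^2)" by (subst ln_less_cancel_iff) (use rho0 rhor r0' in auto)
    also have "ln (r^2) = 2 * ln r" using r0' by (simp add: ln_realpow)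
    also have "2 * ln r \<le> 2 * ln r0" using H r0' by simp
    also have "2 * ln r0 = - A" by (simp add: r0_def)
    finally have aA: "A < a" by (simp add: a_def)
    have a8: "8 \<le> a" using aA A8 by simp
    have aL: "96 * Lam * 6^N / lam \<le> a" using aA by (simp add: A_def)
    define M where "M = nat \<lfloor>a / 12\<rfloor>"
    note MB = M_bound[OF rho0 r0'(1) rhor a_def a8 M_def]
    note LKl = LK_lower[of lam Lam \<alpha> r x K M]
    have "(10::real) \<le> 1 + 8 + 8^2/2" by simp
    also have "\<dots> \<le> exp 8" by (rule exp_lower_Taylor_quadratic) simp
    finally have "ln (10::real) \<le> ln (exp 8)" by (subst ln_le_cancel_iff) auto
    then have "ln (10::real) \<le> 8" by simp
    then have "ln \<rho> \<le> ln (1/10)" using a8 by (simp add: a_def ln_div)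
    then have r10: "\<rho> \<le> 1/10" using rho0 by simp
    have phix: "Phi \<alpha> (norm x - r) = a powr (- \<alpha>)"
      using rho0 r10 by (simp add: Phi_eq \<rho>_def[symmetric] a_def min_def)
    have rr: "norm x - r < r^2" using rhor by (simp add: \<rho>_def)
    have a8': "8 \<le> - ln (norm x - r)" using a8 by (simp add: a_def \<rho>_def)
    have L: "(real M + 1) * (lam * Phi \<alpha> (norm x - r) * unit_ball_vol (DIM('a)) / 3^DIM('a))
           - unit_ball_vol (DIM('a)) * (Lam * 2^DIM('a) * (32 * \<alpha> * (- ln (norm x - r)) powr (1 - \<alpha>) + 2 / (- ln (norm x - r))))
         \<le> LK K (\<lambda>y. Phi \<alpha> (norm y - r)) x"
      by (rule LKl[OF assms(1,2) al0 al4 r0'(1) r0'(2) xr rr a8' Kb Kmeas]) (use MB(1) in \<open>simp add: \<rho>_def\<close>)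
    define W where "W = \<omega> * Lam * 2^N"
    have L': "(real M + 1) * (B * a powr (- \<alpha>)) - W * (32 * \<alpha> * a powr (1 - \<alpha>) + 2 / a)
         \<le> LK K (\<lambda>y. Phi \<alpha> (norm y - r)) x"
    proof -
      have e1: "lam * Phi \<alpha> (norm x - r) * unit_ball_vol (DIM('a)) / 3^DIM('a) = B * a powr (- \<alpha>)"
        by (simp add: phix B_def \<omega>_def N_def)
      have e2: "unit_ball_vol (DIM('a)) * (Lam * 2^DIM('a) * (32 * \<alpha> * (- ln (norm x - r)) powr (1 - \<alpha>) + 2 / (- ln (norm x - r))))
          = W * (32 * \<alpha> * a powr (1 - \<alpha>) + 2 / a)"
        by (simp add: W_def \<omega>_def N_def a_def \<rho>_def)
      show ?thesis using L unfolding e1 e2 .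
    qed
    have six: "(6::real)^N = 2^N * 3^N" by (simp add: power_mult_distrib[symmetric])
    have D0: "0 < 1536 * Lam * 6^N" using L0 by simp
    have "\<alpha> \<le> lam / (1536 * Lam * 6^N)" by (simp add: \<alpha>_def)
    then have aD: "\<alpha> * (1536 * Lam * 6^N) \<le> lam" using D0 by (simp add: le_divide_eq)
    have c7: "W * 32 * \<alpha> \<le> B / 48"
    proof -
      have "W * 32 * \<alpha> = (\<alpha> * (1536 * Lam * 6^N)) * (\<omega> / (48 * 3^N))"
        by (simp add: W_def six field_simps)
      also have "\<dots> \<le> lam * (\<omega> / (48 * 3^N))" using aD \<omega>0 by (intro mult_right_mono) auto
      also have "\<dots> = B / 48" by (simp add: B_def)
      finally show ?thesis .
    qed
    have "96 * Lam * 6^N \<le> lam * a" using aL assms(1) by (simp add: divide_le_eq mult.commute)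
    then have c8: "W * 2 \<le> B * a / 48"
    proof -
      assume h: "96 * Lam * 6^N \<le> lam * a"
      have "W * 2 = (96 * Lam * 6^N) * (\<omega> / (48 * 3^N))"
        by (simp add: W_def six field_simps)
      also have "\<dots> \<le> (lam * a) * (\<omega> / (48 * 3^N))" using h \<omega>0 by (intro mult_right_mono) auto
      also have "\<dots> = B * a / 48" by (simp add: B_def field_simps)
      finally show ?thesis .
    qed
    have W0: "0 \<le> W" using \<omega>0 L0 by (simp add: W_def)
    have F: "B / 24 \<le> (real M + 1) * (B * a powr (- \<alpha>)) - W * (32 * \<alpha> * a powr (1 - \<alpha>) + 2 / a)"
      by (rule final_num[OF B0 _ al0 al4 MB(2) W0 c7 c8]) (use a8 in simp)
    have phi_eq: "(\<lambda>y. ell (max (norm y - r) 0) powr \<alpha>) = (\<lambda>y. Phi \<alpha> (norm y - r))"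
      by (simp add: Phi_def)
    have "\<delta> \<le> B / 24" by (simp add: \<delta>_def)
    then show "\<delta> \<le> LK K (\<lambda>y. ell (max (norm y - r) 0) powr \<alpha>) x"
      unfolding phi_eq using F L' by linarith
  qed
  show ?thesis using c1 c2 c3 main by blast
qed

end
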